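(* Let $n\ge 8$ and let $\widetilde\Delta_n$ be the connected component of $\widetilde P_0(S_n)$ containing $[(1\,2)]$. Then every vertex $[\psi]$ of $\widetilde P_0(S_n)$ lies in $\widetilde\Delta_n$, except possibly those for which $o(\psi)$ is a prime $p$ with $p\ge n-1$.
   Context: $\widetilde P_0(S_n)$: vertex set $\{[x]:x\in S_n\setminus\{\mathrm{id}\}\}$ with $[x]=\{y:\langle y\rangle=\langle x\rangle\}$, distinct $[x],[y]$ adjacent iff some representatives are one a positive power of the other. *)

theory Defs
  imports "HOL-Algebra.Sym_Groups" "HOL-Algebra.Multiplicative_Group" "HOL-Computational_Algebra.Primes"
begin

definition pclass :: "('a, 'b) monoid_scheme \<Rightarrow> 'a \<Rightarrow> 'a set" where
  "pclass G x = {y \<in> carrier G. generate G {y} = generate G {x}}"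

definition rpg_vertices :: "('a, 'b) monoid_scheme \<Rightarrow> 'a set set" where
  "rpg_vertices G = {pclass G x | x. x \<in> carrier G \<and> x \<noteq> \<one>\<^bsub>G\<^esub>}"

definition rpg_adj :: "('a, 'b) monoid_scheme \<Rightarrow> 'a set \<Rightarrow> 'a set \<Rightarrow> bool" where
  "rpg_adj G u v \<longleftrightarrow> u \<in> rpg_vertices G \<and> v \<in> rpg_vertices G \<and> u \<noteq> v \<and>
     (\<exists>x\<in>u. \<exists>y\<in>v. \<exists>k::nat. k > 0 \<and> (x = y [^]\<^bsub>G\<^esub> k \<or> y = x [^]\<^bsub>G\<^esub> k))"

definition rpg_connected :: "('a, 'b) monoid_scheme \<Rightarrow> 'a set \<Rightarrow> 'a set \<Rightarrow> bool" where
  "rpg_connected G u v \<longleftrightarrow> u \<in> rpg_vertices G \<and> v \<in> rpg_vertices G \<and> (rpg_adj G)\<^sup>*\<^sup>* u v"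

end

theory Submission
  imports Defs
begin


definition conn :: "('a, 'b) monoid_scheme \<Rightarrow> 'a \<Rightarrow> 'a \<Rightarrow> bool" where
  "conn G x y \<longleftrightarrow> rpg_connected G (pclass G x) (pclass G y)"

lemma rpg_adj_sym: "rpg_adj G u v \<Longrightarrow> rpg_adj G v u"
  unfolding rpg_adj_def by blast

lemma rtranclp_adj_sym: "(rpg_adj G)\<^sup>*\<^sup>* u v \<Longrightarrow> (rpg_adj G)\<^sup>*\<^sup>* v u"
proof (induction rule: rtranclp_induct)
  case base then show ?case by simp
next
  case (step y z)
  then show ?case using rpg_adj_sym
    by (metis converse_rtranclp_into_rtranclp)
qed

lemma conn_sym: "conn G x y \<Longrightarrow> conn G y x"
  unfolding conn_def rpg_connected_def using rtranclp_adj_sym by blast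

lemma conn_trans: "conn G x y \<Longrightarrow> conn G y z \<Longrightarrow> conn G x z"
  unfolding conn_def rpg_connected_def by auto

lemma pclass_self: "x \<in> carrier G \<Longrightarrow> x \<in> pclass G x"
  unfolding pclass_def by simp

lemma pclass_vert: "x \<in> carrier G \<Longrightarrow> x \<noteq> \<one>\<^bsub>G\<^esub> \<Longrightarrow> pclass G x \<in> rpg_vertices G"
  unfolding rpg_vertices_def by blast

lemma (in group) conn_pow:
  fixes k :: nat
  assumes "x \<in> carrier G" "x \<noteq> \<one>" "x [^] k \<noteq> \<one>"
  shows "conn G x (x [^] k)"
proof -
  have k: "k > 0" using assms by (cases k) auto
  have c: "x [^] k \<in> carrier G" using assms by simp
  have v1: "pclass G x \<in> rpg_vertices G" by (rule pclass_vert[OF assms(1,2)])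
  have v2: "pclass G (x [^] k) \<in> rpg_vertices G" by (rule pclass_vert[OF c assms(3)])
  show ?thesis
  proof (cases "pclass G x = pclass G (x [^] k)")
    case True then show ?thesis unfolding conn_def rpg_connected_def
      using v1 by (metis rtranclp.rtrancl_refl)
  next
    case False
    have ex: "\<exists>xa\<in>pclass G x. \<exists>y\<in>pclass G (x [^] k). \<exists>k'::nat. k' > 0 \<and> (xa = y [^] k' \<or> y = xa [^] k')"
      using pclass_self[OF assms(1)] pclass_self[OF c] k by blast
    have "rpg_adj G (pclass G x) (pclass G (x [^] k))"
      unfolding rpg_adj_def using v1 v2 False ex by blast
    then show ?thesis unfolding conn_def rpg_connected_def
      using v1 v2 by (simp add: r_into_rtranclp)
  qed
qed

lemma (in group) conn_coprime:
  assumes fin: "finite (carrier G)" and xy: "x \<in> carrier G" "y \<in> carrier G"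
    and comm: "x \<otimes> y = y \<otimes> x" and cop: "coprime (ord x) (ord y)"
    and ne: "x \<noteq> \<one>" "y \<noteq> \<one>"
  shows "conn G x y"
proof -
  define a where "a = ord x"
  define b where "b = ord y"
  have a0: "a \<noteq> 0" using ord_ge_1[OF fin xy(1)] a_def by simp
  have b0: "b \<noteq> 0" using ord_ge_1[OF fin xy(2)] b_def by simp
  have g: "gcd a b = 1" "gcd b a = 1" using cop a_def b_def by (auto simp: gcd.commute)
  obtain u v where uv: "b * u = a * v + 1" using bezout_nat[OF b0, of a] g by auto
  obtain u' v' where uv': "a * u' = b * v' + 1" using bezout_nat[OF a0, of b] g by auto
  define z where "z = x \<otimes> y"
  have zc: "z \<in> carrier G" using xy z_def by simp
  have pw: "z [^] k = x [^] k \<otimes> y [^] k" for k :: nat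
    unfolding z_def using pow_mult_distrib[OF comm xy] .
  have xa: "x [^] (a * w) = \<one>" for w using xy a_def by (simp add: pow_eq_id)
  have yb: "y [^] (b * w) = \<one>" for w using xy b_def by (simp add: pow_eq_id)
  have "z [^] (b * u) = x"
    using pw[of "b*u"] uv xa[of v] yb[of u] xy by (simp add: nat_pow_mult)
  moreover have "z [^] (a * u') = y"
    using pw[of "a*u'"] uv' xa[of u'] yb[of v'] xy by (simp add: nat_pow_mult)
  ultimately have zx: "conn G z x" and zy: "conn G z y"
    using conn_pow[OF zc] ne by (metis nat_pow_one)+
  show ?thesis using conn_trans[OF conn_sym[OF zx] zy] .
qed



definition cyc3 :: "nat \<Rightarrow> nat \<Rightarrow> nat \<Rightarrow> nat \<Rightarrow> nat" where
  "cyc3 a b c = Transposition.transpose a b \<circ> Transposition.transpose b c"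

lemma cyc3_apply: "distinct [a,b,c] \<Longrightarrow> cyc3 a b c a = b \<and> cyc3 a b c b = c \<and> cyc3 a b c c = a
   \<and> (\<forall>x. x \<notin> {a,b,c} \<longrightarrow> cyc3 a b c x = x)"
  by (auto simp: cyc3_def transpose_def)

lemma cyc3_perm: "a \<in> S \<Longrightarrow> b \<in> S \<Longrightarrow> c \<in> S \<Longrightarrow> cyc3 a b c permutes S"
  unfolding cyc3_def by (intro permutes_compose permutes_swap_id)

lemma sg_group: "group (sym_group n)" by (rule sym_group_is_group)

lemma sg_fin: "finite (carrier (sym_group n))"
  unfolding sym_group_carrier[abs_def] sym_group_def by (simp add: finite_permutations)

lemma sg_pow: "x [^]\<^bsub>sym_group n\<^esub> (k::nat) = x ^^ k"
  by (induction k) (auto simp: sym_group_def funpow_swap1)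

lemma sg_mult: "x \<otimes>\<^bsub>sym_group n\<^esub> y = x \<circ> y"
  by (simp add: sym_group_mult)

lemma sg_one: "\<one>\<^bsub>sym_group n\<^esub> = id"
  by (simp add: sym_group_one)

lemma sg_ord_prime:
  assumes "x \<in> carrier (sym_group n)" "x \<noteq> id" "x ^^ p = id" "prime p"
  shows "group.ord (sym_group n) x = p"
proof -
  interpret G: group "sym_group n" by (rule sg_group)
  have "G.ord x dvd p" using assms G.pow_eq_id[of x p] by (simp add: sg_pow sg_one)
  moreover have "G.ord x \<noteq> 1" using assms G.ord_eq_1 by (simp add: sg_one)
  ultimately show ?thesis using assms(4) unfolding prime_nat_iff by blast
qed

lemma cyc3_cube: "distinct [a,b,c] \<Longrightarrow> cyc3 a b c ^^ 3 = id"
proof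
  fix x assume d: "distinct [a,b,c]"
  show "(cyc3 a b c ^^ 3) x = id x"
    using cyc3_apply[OF d] by (cases "x \<in> {a,b,c}") (auto simp: numeral_3_eq_3)
qed

lemma transp_sq: "Transposition.transpose a b ^^ 2 = id"
  by (simp add: numeral_2_eq_2 fun_eq_iff transpose_def)

lemma transp_ord: "a \<in> {1..n} \<Longrightarrow> b \<in> {1..n} \<Longrightarrow> a \<noteq> b \<Longrightarrow>
  group.ord (sym_group n) (Transposition.transpose a b) = 2"
  by (rule sg_ord_prime) (auto simp: sym_group_carrier transp_sq permutes_swap_id fun_eq_iff transpose_def)

lemma transp_ne: "a \<noteq> b \<Longrightarrow> Transposition.transpose a b \<noteq> id"
  by (metis id_apply transpose_apply_first)

lemma pick:
  assumes "finite A" "finite B" "card B < card A"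
  shows "\<exists>x\<in>A. x \<notin> B"
  using assms card_mono by (metis not_le subsetI)

lemma pick_set:
  assumes "length xs < card (A::nat set)" "finite A"
  shows "\<exists>x\<in>A. x \<notin> set xs"
  using pick[OF assms(2), of "set xs"] assms card_length[of xs] by simp

lemma conn_trans_sg:
  assumes "n \<ge> 8" "a \<in> {1..n}" "b \<in> {1..n}" "a \<noteq> b"
  shows "conn (sym_group n) (Transposition.transpose a b) (Transposition.transpose 1 2)"
proof -
  interpret G: group "sym_group n" by (rule sg_group)
  have cn: "card {1..n} = n" by simp
  obtain c where c: "c \<in> {1..n}" "c \<notin> set [1,2,a,b]" using pick_set[of "[1,2,a,b]" "{1..n}"] assms by auto
  obtain d where d: "d \<in> {1..n}" "d \<notin> set [1,2,a,b,c]" using pick_set[of "[1,2,a,b,c]" "{1..n}"] assms by auto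
  obtain e where e: "e \<in> {1..n}" "e \<notin> set [1,2,a,b,c,d]" using pick_set[of "[1,2,a,b,c,d]" "{1..n}"] assms by auto
  define k where "k = cyc3 c d e"
  have dist: "distinct [c,d,e]" using c d e by auto
  have kc: "k \<in> carrier (sym_group n)" unfolding k_def sym_group_carrier using c d e cyc3_perm by blast
  have kne: "k \<noteq> id" using cyc3_apply[OF dist] dist unfolding k_def by (metis id_apply distinct_length_2_or_more)
  have k3: "G.ord k = 3" using sg_ord_prime[OF kc kne] cyc3_cube[OF dist] k_def by simp
  have t1: "Transposition.transpose 1 2 \<in> carrier (sym_group n)"
    unfolding sym_group_carrier using assms by (intro permutes_swap_id) auto
  have t2: "Transposition.transpose a b \<in> carrier (sym_group n)"
    unfolding sym_group_carrier using assms by (intro permutes_swap_id) auto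
  have o1: "G.ord (Transposition.transpose 1 2) = 2"
    using assms by (intro transp_ord) auto
  have o2: "G.ord (Transposition.transpose a b) = 2"
    using assms by (intro transp_ord) auto
  have com1: "k \<circ> Transposition.transpose 1 2 = Transposition.transpose 1 2 \<circ> k"
    using c d e unfolding k_def cyc3_def by (auto simp: transpose_def fun_eq_iff)
  have com2: "k \<circ> Transposition.transpose a b = Transposition.transpose a b \<circ> k"
    using c d e unfolding k_def cyc3_def by (auto simp: transpose_def fun_eq_iff)
  have "conn (sym_group n) k (Transposition.transpose 1 2)"
    by (rule G.conn_coprime[OF sg_fin kc t1]) (use com1 k3 o1 kne transp_ne[of "1::nat" 2] in \<open>simp_all add: sg_mult sg_one\<close>)
  moreover have "conn (sym_group n) k (Transposition.transpose a b)"
    by (rule G.conn_coprime[OF sg_fin kc t2]) (use com2 k3 o2 kne transp_ne[of a b] assms in \<open>simp_all add: sg_mult sg_one\<close>)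
  ultimately show ?thesis using conn_sym conn_trans by metis
qed



abbreviation T :: "nat \<Rightarrow> nat" where "T \<equiv> Transposition.transpose 1 2"

lemma connA:
  assumes n: "n \<ge> 8" and xc: "x \<in> carrier (sym_group n)" and xne: "x \<noteq> id"
    and od: "odd (group.ord (sym_group n) x)"
    and ab: "a \<in> {1..n}" "b \<in> {1..n}" "a \<noteq> b" and fx: "x a = a" "x b = b"
  shows "conn (sym_group n) x T"
proof -
  interpret G: group "sym_group n" by (rule sg_group)
  have inj: "inj x" using xc unfolding sym_group_carrier by (rule permutes_inj)
  have ia: "x y = a \<longleftrightarrow> y = a" for y using inj fx by (metis injD)
  have ib: "x y = b \<longleftrightarrow> y = b" for y using inj fx by (metis injD)
  have tc: "Transposition.transpose a b \<in> carrier (sym_group n)"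
    unfolding sym_group_carrier using ab by (intro permutes_swap_id) auto
  have com: "x \<circ> Transposition.transpose a b = Transposition.transpose a b \<circ> x"
    using ia ib fx by (auto simp: transpose_def fun_eq_iff)
  have cop: "coprime (G.ord x) (G.ord (Transposition.transpose a b))"
    using transp_ord[OF ab] od by simp
  have "conn (sym_group n) x (Transposition.transpose a b)"
    by (rule G.conn_coprime[OF sg_fin xc tc]) (use com cop xne transp_ne[OF ab(3)] in \<open>simp_all add: sg_mult sg_one\<close>)
  moreover have "conn (sym_group n) (Transposition.transpose a b) T"
    using conn_trans_sg[OF n ab] .
  ultimately show ?thesis by (rule conn_trans)
qed

lemma cyc3_ne: "distinct [a,b,c] \<Longrightarrow> cyc3 a b c \<noteq> id"
  using cyc3_apply by (metis id_apply distinct_length_2_or_more)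

lemma conn_cyc3:
  assumes n: "n \<ge> 8" and abc: "a \<in> {1..n}" "b \<in> {1..n}" "c \<in> {1..n}" "distinct [a,b,c]"
  shows "conn (sym_group n) (cyc3 a b c) T"
proof -
  obtain d where d: "d \<in> {1..n}" "d \<notin> set [a,b,c]" using pick_set[of "[a,b,c]" "{1..n}"] n by auto
  obtain e where e: "e \<in> {1..n}" "e \<notin> set [a,b,c,d]" using pick_set[of "[a,b,c,d]" "{1..n}"] n by auto
  have kc: "cyc3 a b c \<in> carrier (sym_group n)" unfolding sym_group_carrier using abc cyc3_perm by blast
  have k3: "group.ord (sym_group n) (cyc3 a b c) = 3"
    using sg_ord_prime[OF kc cyc3_ne[OF abc(4)]] cyc3_cube[OF abc(4)] by simp
  show ?thesis
    by (rule connA[OF n kc cyc3_ne[OF abc(4)], of d e]) (use k3 d e cyc3_apply[OF abc(4)] in auto)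
qed



lemma cyc3_other: "x \<notin> {a,b,c} \<Longrightarrow> cyc3 a b c x = x"
  by (auto simp: cyc3_def transpose_def)

lemma cyc3_1: "distinct [a,b,c] \<Longrightarrow> cyc3 a b c a = b"
  by (simp add: cyc3_def transpose_def)
lemma cyc3_2: "distinct [a,b,c] \<Longrightarrow> cyc3 a b c b = c"
  by (simp add: cyc3_def transpose_def)
lemma cyc3_3: "distinct [a,b,c] \<Longrightarrow> cyc3 a b c c = a"
  by (simp add: cyc3_def transpose_def)

lemma connD:
  assumes n: "n \<ge> 8" and ic: "i \<in> carrier (sym_group n)" and ii: "i \<circ> i = id" and ine: "i \<noteq> id"
  shows "conn (sym_group n) i T"
proof -
  interpret G: group "sym_group n" by (rule sg_group)
  have ii': "i (i x) = x" for x using ii by (metis comp_apply id_apply)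
  have ip: "i permutes {1..n}" using ic sym_group_carrier by blast
  have iin: "i x \<in> {1..n} \<longleftrightarrow> x \<in> {1..n}" for x using permutes_in_image[OF ip] .
  have o2: "G.ord i = 2"
  proof -
    have "i ^^ 2 = id" using ii by (simp add: numeral_2_eq_2)
    then show ?thesis using sg_ord_prime[OF ic ine] by simp
  qed
  define M where "M = {x\<in>{1..n}. i x \<noteq> x}"
  define F where "F = {x\<in>{1..n}. i x = x}"
  have fM: "finite M" "finite F" unfolding M_def F_def by auto
  show ?thesis
  proof (cases "card M \<ge> 5")
    case True
    obtain c where c: "c \<in> M" using pick_set[of "[]" M] True fM by auto
    define d where "d = i c"
    obtain e where e: "e \<in> M" "e \<notin> set [c,d]" using pick_set[of "[c,d]" M] True fM by auto
    define f where "f = i e"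
    obtain g where g: "g \<in> M" "g \<notin> set [c,d,e,f]" using pick_set[of "[c,d,e,f]" M] True fM by auto
    define h where "h = i g"
    have mem: "c \<in> {1..n}" "d \<in> {1..n}" "e \<in> {1..n}" "f \<in> {1..n}" "g \<in> {1..n}" "h \<in> {1..n}"
      using c e g iin unfolding M_def d_def f_def h_def by auto
    have iv: "i c = d" "i d = c" "i e = f" "i f = e" "i g = h" "i h = g"
      using ii' d_def f_def h_def by auto
    have mv: "i c \<noteq> c" "i e \<noteq> e" "i g \<noteq> g" using c e g unfolding M_def by auto
    have inv: "\<And>u v. i u = v \<Longrightarrow> u = i v" using ii' by metis
    have ds1: "c \<noteq> d" "e \<noteq> f" "g \<noteq> h" using mv d_def f_def h_def by auto
    have ds2: "c \<noteq> e" "d \<noteq> e" "g \<noteq> c" "g \<noteq> d" "g \<noteq> e" "g \<noteq> f" using e g by auto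
    have ds3: "c \<noteq> f" "d \<noteq> f" using inv iv e(2) f_def by auto
    have ds4: "h \<noteq> c" "h \<noteq> d" "h \<noteq> e" "h \<noteq> f"
    proof -
      have "g \<noteq> d" "g \<noteq> c" "g \<noteq> f" "g \<noteq> e" using g(2) by auto
      then have "i g \<noteq> i d" "i g \<noteq> i c" "i g \<noteq> i f" "i g \<noteq> i e" using ii' by metis+
      then show "h \<noteq> c" "h \<noteq> d" "h \<noteq> e" "h \<noteq> f" using iv by simp_all
    qed
    note ds = ds1 ds2 ds3 ds4
    note dsym = ds[THEN not_sym]
    have dist: "distinct [c,d,e,f,g,h]" by (simp add: ds dsym)
    have d1: "distinct [c,e,g]" "distinct [d,f,h]" by (simp_all add: ds dsym)
    define y where "y = cyc3 c e g \<circ> cyc3 d f h"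
    have yv: "y c = e" "y e = g" "y g = c" "y d = f" "y f = h" "y h = d"
      "\<And>x. x \<notin> {c,d,e,f,g,h} \<Longrightarrow> y x = x"
    proof -
      note A = cyc3_apply[OF d1(1)] and B = cyc3_apply[OF d1(2)]
      have ne: "c \<notin> {d,f,h}" "e \<notin> {d,f,h}" "g \<notin> {d,f,h}" "f \<notin> {c,e,g}" "h \<notin> {c,e,g}" "d \<notin> {c,e,g}"
        by (simp_all add: ds dsym)
      have o1: "cyc3 d f h c = c" "cyc3 d f h e = e" "cyc3 d f h g = g"
        by (rule cyc3_other, rule ne)+
      have o2: "cyc3 c e g f = f" "cyc3 c e g h = h" "cyc3 c e g d = d"
        by (rule cyc3_other, rule ne)+
      show "y c = e" "y e = g" "y g = c" "y d = f" "y f = h" "y h = d"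
        unfolding y_def comp_apply o1 using A B o2 by simp_all
      show "\<And>x. x \<notin> {c,d,e,f,g,h} \<Longrightarrow> y x = x"
        unfolding y_def comp_apply by (simp add: cyc3_other)
    qed
    have yc: "y \<in> carrier (sym_group n)" unfolding sym_group_carrier y_def
      using mem by (intro permutes_compose cyc3_perm)
    have yne: "y \<noteq> id"
    proof
      assume "y = id" then have "y c = c" by simp
      with yv(1) have "e = c" by simp
      with ds show False by simp
    qed
    have y3: "y ^^ 3 = id"
    proof
      fix x
      have "x = c \<or> x = d \<or> x = e \<or> x = f \<or> x = g \<or> x = h \<or> x \<notin> {c,d,e,f,g,h}" by blast
      then show "(y ^^ 3) x = id x"
        by (elim disjE) (simp_all add: numeral_3_eq_3 yv)
    qed
    have oy: "G.ord y = 3" using sg_ord_prime[OF yc yne y3] by simp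
    have com: "y \<circ> i = i \<circ> y"
    proof
      fix x show "(y \<circ> i) x = (i \<circ> y) x"
      proof (cases "x \<in> {c,d,e,f,g,h}")
        case True
        then have "x = c \<or> x = d \<or> x = e \<or> x = f \<or> x = g \<or> x = h" by simp
        then show ?thesis by (elim disjE) (simp_all add: yv iv)
      next
        case False
        have "i x \<notin> {c,d,e,f,g,h}"
        proof
          assume "i x \<in> {c,d,e,f,g,h}"
          then have "i x = c \<or> i x = d \<or> i x = e \<or> i x = f \<or> i x = g \<or> i x = h" by simp
          then have "i (i x) = i c \<or> i (i x) = i d \<or> i (i x) = i e \<or> i (i x) = i f \<or> i (i x) = i g \<or> i (i x) = i h"
            by (elim disjE) simp_all
          then have "x \<in> {c,d,e,f,g,h}" unfolding ii' iv by blast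
          then show False using False by simp
        qed
        then show ?thesis using False yv by simp
      qed
    qed
    obtain a where a: "a \<in> {1..n}" "a \<notin> set [c,d,e,f,g,h]" using pick_set[of "[c,d,e,f,g,h]" "{1..n}"] n by auto
    obtain b where b: "b \<in> {1..n}" "b \<notin> set [c,d,e,f,g,h,a]" using pick_set[of "[c,d,e,f,g,h,a]" "{1..n}"] n by auto
    have yT: "conn (sym_group n) y T"
    proof (rule connA[OF n yc yne _ a(1) b(1)])
      show "odd (G.ord y)" using oy by simp
      show "a \<noteq> b" using b by simp
      show "y a = a" by (rule yv(7)) (use a in simp)
      show "y b = b" by (rule yv(7)) (use b in simp)
    qed
    have "conn (sym_group n) i y"
      by (rule G.conn_coprime[OF sg_fin ic yc]) (use com o2 oy ine yne in \<open>simp_all add: sg_mult sg_one\<close>)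
    then show ?thesis using yT by (rule conn_trans)
  next
    case False
    have "{1..n} \<subseteq> M \<union> F" unfolding M_def F_def by auto
    then have "card {1..n} \<le> card (M \<union> F)" by (rule card_mono[rotated]) (use fM in simp)
    then have "n \<le> card (M \<union> F)" by simp
    also have "\<dots> \<le> card M + card F" by (rule card_Un_le)
    finally have cF: "card F \<ge> 4" using False n by linarith
    obtain a where a: "a \<in> F" using pick_set[of "[]" F] cF fM by auto
    obtain b where b: "b \<in> F" "b \<notin> set [a]" using pick_set[of "[a]" F] cF fM by auto
    obtain c where c: "c \<in> F" "c \<notin> set [a,b]" using pick_set[of "[a,b]" F] cF fM by auto
    have dist: "distinct [a,b,c]" using b c by auto
    have mem: "a \<in> {1..n}" "b \<in> {1..n}" "c \<in> {1..n}" "i a = a" "i b = b" "i c = c"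
      using a b c unfolding F_def by auto
    define k where "k = cyc3 a b c"
    have kc: "k \<in> carrier (sym_group n)" unfolding sym_group_carrier k_def
      using mem by (intro cyc3_perm)
    have kne: "k \<noteq> id" using cyc3_ne[OF dist] k_def by simp
    have ok: "G.ord k = 3" using sg_ord_prime[OF kc kne] cyc3_cube[OF dist] k_def by simp
    have com: "k \<circ> i = i \<circ> k"
    proof
      fix x show "(k \<circ> i) x = (i \<circ> k) x"
      proof (cases "x \<in> {a,b,c}")
        case True
        then have "x = a \<or> x = b \<or> x = c" by simp
        then show ?thesis by (elim disjE) (simp_all add: mem k_def cyc3_1[OF dist] cyc3_2[OF dist] cyc3_3[OF dist])
      next
        case False
        have "i x \<notin> {a,b,c}"
        proof
          assume "i x \<in> {a,b,c}"
          then have "i x = a \<or> i x = b \<or> i x = c" by simp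
          then have "i (i x) = i a \<or> i (i x) = i b \<or> i (i x) = i c"
            by (elim disjE) simp_all
          then have "x \<in> {a,b,c}" unfolding ii' mem(4-6) by blast
          then show False using False by simp
        qed
        then show ?thesis using False by (simp add: k_def cyc3_other)
      qed
    qed
    have kT: "conn (sym_group n) k T" unfolding k_def using conn_cyc3[OF n mem(1-3) dist] .
    have "conn (sym_group n) i k"
      by (rule G.conn_coprime[OF sg_fin ic kc]) (use com o2 ok ine kne in \<open>simp_all add: sg_mult sg_one\<close>)
    then show ?thesis using kT by (rule conn_trans)
  qed
qed



lemma fp_fix: "f x = x \<Longrightarrow> (f ^^ u) x = x"
  by (induction u) auto

lemma fp_mul: "g ^^ q = id \<Longrightarrow> g ^^ (q * v) = id"
  by (metis funpow_mult id_funpow)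

lemma fp_mod: "g ^^ q = id \<Longrightarrow> g ^^ i = g ^^ (i mod q)"
proof -
  assume h: "g ^^ q = id"
  have "g ^^ i = g ^^ (q * (i div q) + i mod q)" by simp
  also have "\<dots> = g ^^ (q * (i div q)) \<circ> g ^^ (i mod q)" by (rule funpow_add)
  also have "\<dots> = g ^^ (i mod q)" using fp_mul[OF h] by simp
  finally show ?thesis .
qed

lemma fix_dvd:
  assumes q: "g ^^ q = id" "prime q" and gx: "g x \<noteq> x" and fi: "(g ^^ i) x = x"
  shows "q dvd i"
proof (rule ccontr)
  assume nd: "\<not> q dvd i"
  then have i0: "i \<noteq> 0" by (metis dvd_0_right)
  have "coprime i q" using prime_imp_coprime[OF q(2) nd] by (simp add: coprime_commute)
  then have g1: "gcd i q = 1" by simp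
  obtain u v where uv: "i * u = q * v + 1" using bezout_nat[OF i0, of q] g1 by auto
  have "(g ^^ (i * u)) x = x" using fp_fix[of "g ^^ i" x u] fi by (simp add: funpow_mult mult.commute)
  moreover have "g ^^ (i * u) = g"
    unfolding uv using fp_mul[OF q(1), of v] by (simp add: funpow_add)
  ultimately show False using gx by simp
qed

lemma orb_eq:
  assumes inj: "inj g" and q: "g ^^ q = id" "prime q" and gx: "g x \<noteq> x"
    and eq: "(g ^^ i) x = (g ^^ j) x"
  shows "i mod q = j mod q"
proof -
  have q0: "q > 0" using q(2) prime_gt_0_nat by blast
  have key: "a = b" if ab: "a \<le> b" "b < q" "(g ^^ a) x = (g ^^ b) x" for a b
  proof -
    have "(g ^^ b) x = (g ^^ a) ((g ^^ (b - a)) x)"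
      using ab(1) by (metis funpow_add comp_apply le_add_diff_inverse)
    then have "(g ^^ (b - a)) x = x" using ab(3) inj_fn[OF inj, of a] by (metis injD)
    then have "q dvd (b - a)" by (rule fix_dvd[OF q gx])
    then show "a = b" using ab by (metis diff_is_0_eq dvd_imp_le le_antisym less_imp_diff_less not_gr0 not_le)
  qed
  have e2: "(g ^^ (i mod q)) x = (g ^^ (j mod q)) x" using eq fp_mod[OF q(1)] by metis
  show ?thesis
  proof (cases "i mod q \<le> j mod q")
    case True then show ?thesis using key e2 q0 by simp
  next
    case False then show ?thesis using key[of "j mod q" "i mod q"] e2 q0 by simp
  qed
qed

lemma wd:
  assumes inj: "inj g" and q: "g ^^ q = id" "prime q" and gx: "g x \<noteq> x"
    and eq: "(g ^^ i) x = (g ^^ j) x"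
  shows "(g ^^ i) y = (g ^^ j) y"
  using orb_eq[OF assms] fp_mod[OF q(1)] by metis



lemma swap_exists:
  assumes gp: "g permutes S" and q: "g ^^ q = id" "prime q"
    and c: "c \<in> S" "g c \<noteq> c" and e: "e \<in> S" "g e \<noteq> e"
    and ne: "e \<notin> range (\<lambda>i. (g ^^ i) c)"
  shows "\<exists>s. s permutes S \<and> s \<circ> s = id \<and> s \<noteq> id \<and> s \<circ> g = g \<circ> s"
proof -
  have inj: "inj g" using gp by (rule permutes_inj)
  have q0: "q > 0" using q(2) prime_gt_0_nat by blast
  define O1 where "O1 = range (\<lambda>i. (g ^^ i) c)"
  define O2 where "O2 = range (\<lambda>i. (g ^^ i) e)"
  define s where "s = (\<lambda>x. if x \<in> O1 then (g ^^ (SOME i. x = (g ^^ i) c)) e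
     else if x \<in> O2 then (g ^^ (SOME i. x = (g ^^ i) e)) c else x)"
  have bk: "(g ^^ (q * i - i)) ((g ^^ i) y) = y" for i y
  proof -
    have "q * i - i + i = q * i" using q0 by (simp add: le_add_diff_inverse2)
    then have "(g ^^ (q * i - i)) ((g ^^ i) y) = (g ^^ (q * i)) y" by (metis funpow_add comp_apply)
    then show ?thesis using fp_mul[OF q(1)] by simp
  qed
  have disj: "(g ^^ i) e \<notin> O1" for i
  proof
    assume "(g ^^ i) e \<in> O1"
    then obtain j where j: "(g ^^ i) e = (g ^^ j) c" unfolding O1_def by auto
    have "e = (g ^^ (q * i - i)) ((g ^^ j) c)" using bk[of i e] j by simp
    also have "\<dots> = (g ^^ (q * i - i + j)) c" by (simp add: funpow_add)
    finally show False using ne by auto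
  qed
  have s1: "s ((g ^^ i) c) = (g ^^ i) e" for i
  proof -
    have m: "(g ^^ i) c \<in> O1" unfolding O1_def by auto
    define i0 where "i0 = (SOME j. (g ^^ i) c = (g ^^ j) c)"
    have "(g ^^ i) c = (g ^^ i0) c" unfolding i0_def by (rule someI[of _ i]) simp
    then have "(g ^^ i0) e = (g ^^ i) e" using wd[OF inj q c(2)] by metis
    then show ?thesis using m unfolding s_def i0_def by simp
  qed
  have s2: "s ((g ^^ i) e) = (g ^^ i) c" for i
  proof -
    have m: "(g ^^ i) e \<in> O2" unfolding O2_def by auto
    define i0 where "i0 = (SOME j. (g ^^ i) e = (g ^^ j) e)"
    have "(g ^^ i) e = (g ^^ i0) e" unfolding i0_def by (rule someI[of _ i]) simp
    then have "(g ^^ i0) c = (g ^^ i) c" using wd[OF inj q e(2)] by metis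
    then show ?thesis using m disj[of i] unfolding s_def i0_def by simp
  qed
  have s3: "x \<notin> O1 \<Longrightarrow> x \<notin> O2 \<Longrightarrow> s x = x" for x unfolding s_def by simp
  have pre: "g x \<in> range (\<lambda>i. (g ^^ i) y) \<Longrightarrow> x \<in> range (\<lambda>i. (g ^^ i) y)" for x y
  proof -
    assume "g x \<in> range (\<lambda>i. (g ^^ i) y)"
    then obtain j where j: "g x = (g ^^ j) y" by auto
    have "g ((g ^^ (j + q - 1)) y) = (g ^^ (j + q)) y"
      using q0 by (metis Suc_diff_1 add_gr_0 comp_apply funpow.simps(2))
    also have "\<dots> = (g ^^ j) y" using q(1) by (simp add: funpow_add)
    finally have "x = (g ^^ (j + q - 1)) y" using j inj by (metis injD)
    then show ?thesis by auto
  qed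
  have ss: "s \<circ> s = id"
  proof
    fix x show "(s \<circ> s) x = id x"
    proof (cases "x \<in> O1")
      case True then obtain i where "x = (g ^^ i) c" unfolding O1_def by auto
      then show ?thesis using s1 s2 by simp
    next
      case False
      show ?thesis
      proof (cases "x \<in> O2")
        case True then obtain i where "x = (g ^^ i) e" unfolding O2_def by auto
        then show ?thesis using s1 s2 by simp
      qed (use False s3 in simp)
    qed
  qed
  have sg: "s \<circ> g = g \<circ> s"
  proof
    fix x show "(s \<circ> g) x = (g \<circ> s) x"
    proof (cases "x \<in> O1")
      case True then obtain i where x: "x = (g ^^ i) c" unfolding O1_def by auto
      have "g x = (g ^^ Suc i) c" using x by simp
      then show ?thesis using s1[of i] s1[of "Suc i"] x by simp
    next
      case False
      show ?thesis
      proof (cases "x \<in> O2")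
        case True then obtain i where x: "x = (g ^^ i) e" unfolding O2_def by auto
        have "g x = (g ^^ Suc i) e" using x by simp
        then show ?thesis using s2[of i] s2[of "Suc i"] x by simp
      next
        case F2: False
        have "g x \<notin> O1" "g x \<notin> O2" using pre False F2 unfolding O1_def O2_def by blast+
        then show ?thesis using s3 False F2 by simp
      qed
    qed
  qed
  have inS: "(g ^^ i) y \<in> S" if "y \<in> S" for i y
    using permutes_in_image[OF permutes_funpow[OF gp, of i]] that by simp
  have sp: "s permutes S"
    unfolding permutes_def
  proof (intro conjI allI impI)
    fix x assume "x \<notin> S"
    then have "x \<notin> O1" "x \<notin> O2" unfolding O1_def O2_def using inS c e by auto
    then show "s x = x" by (rule s3)
  next
    fix y
    have sy: "s (s y) = y" using ss by (metis comp_apply id_apply)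
    show "\<exists>!x. s x = y"
    proof
      show "s (s y) = y" by (rule sy)
    next
      fix x assume "s x = y"
      then show "x = s y" using ss by (metis comp_apply id_apply)
    qed
  qed
  have "s c = e" using s1[of 0] by simp
  then have "s \<noteq> id" using ne by (metis funpow_0 id_apply rangeI)
  then show ?thesis using sp ss sg by blast
qed



lemma comm_funpow: "(\<And>y. f (g y) = g (f y)) \<Longrightarrow> f ((g ^^ i) x) = (g ^^ i) (f x)"
  by (induction i) auto

lemma prime_odd: "prime (q::nat) \<Longrightarrow> q \<noteq> 2 \<Longrightarrow> odd q"
  by (metis dvd_refl even_iff_mod_2_eq_zero prime_nat_iff two_is_prime_nat primes_dvd_imp_eq)

theorem proposition7p8:
  fixes n :: nat and \<psi> :: "nat \<Rightarrow> nat"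
  assumes "n \<ge> 8"
    and "\<psi> \<in> carrier (sym_group n)" and "\<psi> \<noteq> id"
    and "\<not> (prime (group.ord (sym_group n) \<psi>) \<and> group.ord (sym_group n) \<psi> \<ge> n - 1)"
  shows "rpg_connected (sym_group n) (pclass (sym_group n) (Transposition.transpose 1 2))
           (pclass (sym_group n) \<psi>)"
proof -
  interpret G: group "sym_group n" by (rule sg_group)
  note n = assms(1) and pc = assms(2) and pne = assms(3)
  have pp: "\<psi> permutes {1..n}" using pc sym_group_carrier by blast
  have pinj: "inj \<psi>" using pp by (rule permutes_inj)
  define od where "od = G.ord \<psi>"
  have o1: "od \<ge> 1" unfolding od_def by (rule G.ord_ge_1[OF sg_fin pc])
  have o1': "od \<noteq> 1" unfolding od_def using G.ord_eq_1[OF pc] pne sg_one by simp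
  obtain q where q: "prime q" "q dvd od" using prime_factor_nat[OF o1'] by blast
  define m where "m = od div q"
  have om: "od = q * m" using q(2) m_def by simp
  have m0: "m \<noteq> 0" using om o1 by auto
  have mdvd: "m dvd G.ord \<psi>" using om od_def by simp
  define g where "g = \<psi> [^]\<^bsub>sym_group n\<^esub> m"
  have gc: "g \<in> carrier (sym_group n)" unfolding g_def using pc by simp
  have gpow: "g = \<psi> ^^ m" unfolding g_def by (rule sg_pow)
  have og: "G.ord g = q" unfolding g_def using G.ord_pow[OF pc mdvd m0] om od_def m0 by simp
  have q1: "q > 1" using q(1) prime_gt_1_nat by blast
  have gne: "g \<noteq> id" using og q1 G.ord_eq_1[OF gc] sg_one by auto
  have gq: "g ^^ q = id" using G.pow_eq_id[OF gc, of q] og by (simp add: sg_pow sg_one)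
  have gp: "g permutes {1..n}" using gc sym_group_carrier by blast
  have ginj: "inj g" using gp by (rule permutes_inj)
  have pg: "conn (sym_group n) \<psi> g" unfolding g_def
    using G.conn_pow[OF pc] pne gne by (simp add: sg_one g_def)
  have gT: "conn (sym_group n) g T"
  proof (cases "q = 2")
    case True
    have "g \<circ> g = id" using gq True by (simp add: numeral_2_eq_2)
    then show ?thesis using connD[OF n gc _ gne] by simp
  next
    case False
    have oddq: "odd q" using prime_odd[OF q(1) False] .
    show ?thesis
    proof (cases "\<exists>a\<in>{1..n}. \<exists>b\<in>{1..n}. a \<noteq> b \<and> g a = a \<and> g b = b")
      case True
      then obtain a b where ab: "a \<in> {1..n}" "b \<in> {1..n}" "a \<noteq> b" "g a = a" "g b = b" by blast
      show ?thesis by (rule connA[OF n gc gne _ ab]) (use og oddq in simp)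
    next
      case nofix: False
      obtain c where c0: "g c \<noteq> c" using gne by (metis eq_id_iff)
      have c: "c \<in> {1..n}" using c0 permutes_not_in[OF gp] by blast
      show ?thesis
      proof (cases "\<exists>e\<in>{1..n}. g e \<noteq> e \<and> e \<notin> range (\<lambda>i. (g ^^ i) c)")
        case True
        then obtain e where e: "e \<in> {1..n}" "g e \<noteq> e" "e \<notin> range (\<lambda>i. (g ^^ i) c)" by blast
        obtain s where s: "s permutes {1..n}" "s \<circ> s = id" "s \<noteq> id" "s \<circ> g = g \<circ> s"
          using swap_exists[OF gp gq q(1) c c0 e] by blast
        have sc: "s \<in> carrier (sym_group n)" using s(1) sym_group_carrier by blast
        have "s ^^ 2 = id" using s(2) by (simp add: numeral_2_eq_2)
        then have os: "G.ord s = 2" using sg_ord_prime[OF sc s(3)] by simp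
        have sT: "conn (sym_group n) s T" by (rule connD[OF n sc s(2,3)])
        have "conn (sym_group n) g s"
          by (rule G.conn_coprime[OF sg_fin gc sc]) (use s(4) os og oddq gne s(3) in \<open>simp_all add: sg_mult sg_one\<close>)
        then show ?thesis using sT by (rule conn_trans)
      next
        case allin: False
        have inO: "x \<in> range (\<lambda>i. (g ^^ i) c)" if "x \<in> {1..n}" "g x \<noteq> x" for x
          using allin that by blast
        have fixu: "a = b" if "a \<in> {1..n}" "b \<in> {1..n}" "g a = a" "g b = b" for a b
          using nofix that by blast
        have comm: "\<psi> (g y) = g (\<psi> y)" for y
        proof -
          have "\<psi> \<otimes>\<^bsub>sym_group n\<^esub> (\<psi> [^]\<^bsub>sym_group n\<^esub> m) = (\<psi> [^]\<^bsub>sym_group n\<^esub> m) \<otimes>\<^bsub>sym_group n\<^esub> \<psi>"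
            using G.nat_pow_Suc2[OF pc, of m] G.nat_pow_Suc[of \<psi> m] by simp
          then have "\<psi> \<circ> g = g \<circ> \<psi>" unfolding g_def sg_mult .
          then show ?thesis by (metis comp_apply)
        qed
        have pcin: "\<psi> c \<in> {1..n}" using c permutes_in_image[OF pp] by simp
        have "g (\<psi> c) \<noteq> \<psi> c" using comm[of c] c0 pinj by (metis injD)
        then obtain k where k: "\<psi> c = (g ^^ k) c" using inO[OF pcin] by blast
        have pk: "\<psi> = g ^^ k"
        proof
          fix x
          show "\<psi> x = (g ^^ k) x"
          proof (cases "x \<in> range (\<lambda>i. (g ^^ i) c)")
            case True
            then obtain i where x: "x = (g ^^ i) c" by blast
            have "\<psi> x = (g ^^ i) (\<psi> c)" unfolding x by (rule comm_funpow[of \<psi> g, OF comm])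
            also have "\<dots> = (g ^^ k) x" unfolding x k by (metis funpow_add add.commute comp_apply)
            finally show ?thesis .
          next
            case False
            show ?thesis
            proof (cases "x \<in> {1..n}")
              case True
              have gx: "g x = x" using inO[OF True] False by blast
              have "\<psi> x \<in> {1..n}" using True permutes_in_image[OF pp] by simp
              moreover have "g (\<psi> x) = \<psi> x" using comm[of x] gx by simp
              ultimately have "\<psi> x = x" using fixu True gx by blast
              then show ?thesis using fp_fix[of g x, OF gx] by simp
            next
              case F2: False
              show ?thesis using permutes_not_in[OF pp F2] permutes_not_in[OF permutes_funpow[OF gp] F2] by simp
            qed
          qed
        qed
        have "\<psi> ^^ q = id" unfolding pk funpow_mult using fp_mul[OF gq, of k] by (simp add: mult.commute)
        then have opq: "G.ord \<psi> = q" using sg_ord_prime[OF pc pne _ q(1)] by simp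
        have sub: "{1..n} \<subseteq> (\<lambda>i. (g ^^ i) c) ` {..<q} \<union> {x\<in>{1..n}. g x = x}"
        proof
          fix x assume x: "x \<in> {1..n}"
          show "x \<in> (\<lambda>i. (g ^^ i) c) ` {..<q} \<union> {x\<in>{1..n}. g x = x}"
          proof (cases "g x = x")
            case False
            then obtain i where i: "x = (g ^^ i) c" using inO[OF x] by blast
            have "x = (g ^^ (i mod q)) c" using i fp_mod[OF gq, of i] by simp
            moreover have "i mod q < q" using q1 by simp
            ultimately show ?thesis by blast
          qed (use x in simp)
        qed
        have "n = card {1..n}" by simp
        also have "\<dots> \<le> card ((\<lambda>i. (g ^^ i) c) ` {..<q} \<union> {x\<in>{1..n}. g x = x})"
          by (rule card_mono[OF _ sub], rule finite_UnI, simp, rule finite_subset[of _ "{1..n}"], auto)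
        also have "\<dots> \<le> card ((\<lambda>i. (g ^^ i) c) ` {..<q}) + card {x\<in>{1..n}. g x = x}"
          by (rule card_Un_le)
        also have "\<dots> \<le> q + 1"
        proof (rule add_mono)
          show "card ((\<lambda>i. (g ^^ i) c) ` {..<q}) \<le> q" using card_image_le[of "{..<q}"] by simp
          have "\<forall>a\<in>{x\<in>{1..n}. g x = x}. \<forall>b\<in>{x\<in>{1..n}. g x = x}. a = b" using fixu by blast
          then show "card {x\<in>{1..n}. g x = x} \<le> 1"
            using card_le_Suc0_iff_eq[of "{x\<in>{1..n}. g x = x}"] by simp
        qed
        finally have "q \<ge> n - 1" by linarith
        then have "prime (G.ord \<psi>) \<and> G.ord \<psi> \<ge> n - 1" using opq q(1) by simp
        then show ?thesis using assms(4) by blast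
      qed
    qed
  qed
  have "conn (sym_group n) T \<psi>" using conn_sym[OF conn_trans[OF pg gT]] .
  then show ?thesis unfolding conn_def .
qed

end
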